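(* Let $G$ be an undirected graph and let $W$ be any walk in $G$. Then there exists a walk in $G$ that traverses exactly the same set of edges as $W$ and traverses each of these edges at most twice.
   Context: A walk is a sequence of vertices $v_0,\dots,v_t$ with consecutive vertices adjacent; it traverses the edges $\{v_{j-1},v_j\}$. *)

theory Defs
  imports Main
begin

definition undirected_graph :: "('a \<Rightarrow> 'a \<Rightarrow> bool) \<Rightarrow> bool" where
  "undirected_graph E \<longleftrightarrow> (\<forall>u v. E u v \<longrightarrow> E v u) \<and> (\<forall>v. \<not> E v v)"

definition is_walk :: "('a \<Rightarrow> 'a \<Rightarrow> bool) \<Rightarrow> 'a list \<Rightarrow> bool" where
  "is_walk E W \<longleftrightarrow> W \<noteq> [] \<and> (\<forall>j. Suc j < length W \<longrightarrow> E (W ! j) (W ! Suc j))"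

definition walk_edges :: "'a list \<Rightarrow> 'a set set" where
  "walk_edges W = {{W ! j, W ! Suc j} | j. Suc j < length W}"

definition traversals :: "'a list \<Rightarrow> 'a set \<Rightarrow> nat" where
  "traversals W e = card {j. Suc j < length W \<and> {W ! j, W ! Suc j} = e}"

end

theory Submission
  imports Defs
begin

fun el :: "'a list \<Rightarrow> 'a set list" where
  "el (a#b#xs) = {a,b} # el (b#xs)" | "el _ = []"

fun wk :: "('a \<Rightarrow> 'a \<Rightarrow> bool) \<Rightarrow> 'a list \<Rightarrow> bool" where
  "wk E (a#b#xs) = (E a b \<and> wk E (b#xs))" | "wk E _ = True"

lemma el_len: "length (el W) = length W - 1"
  by (induction W rule: el.induct) auto

lemma el_nth: "j < length W - 1 \<Longrightarrow> el W ! j = {W!j, W!Suc j}"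
proof (induction W arbitrary: j rule: el.induct)
  case (1 a b xs)
  then show ?case by (cases j) auto
qed auto

lemma wk_iff: "wk E W \<longleftrightarrow> (\<forall>j. Suc j < length W \<longrightarrow> E (W!j) (W!Suc j))"
proof (induction E W rule: wk.induct)
  case (1 E a b xs)
  show ?case
  proof
    assume "wk E (a#b#xs)"
    then show "\<forall>j. Suc j < length (a#b#xs) \<longrightarrow> E ((a#b#xs)!j) ((a#b#xs)!Suc j)"
      using 1 by (auto simp: nth_Cons split: nat.splits)
  next
    assume h: "\<forall>j. Suc j < length (a#b#xs) \<longrightarrow> E ((a#b#xs)!j) ((a#b#xs)!Suc j)"
    have "E a b" using h[rule_format, of 0] by simp
    moreover have "\<forall>j. Suc j < length (b#xs) \<longrightarrow> E ((b#xs)!j) ((b#xs)!Suc j)"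
      using h by (metis Suc_less_eq length_Cons nth_Cons_Suc)
    ultimately show "wk E (a#b#xs)" using 1 by simp
  qed
qed auto

lemma walk_edges_el: "walk_edges W = set (el W)"
proof -
  have iff: "\<And>j. j < length (el W) \<longleftrightarrow> Suc j < length W" by (simp add: el_len less_diff_conv)
  have "set (el W) = {el W ! j | j. j < length (el W)}" by (rule set_conv_nth)
  also have "\<dots> = {{W!j, W!Suc j} | j. Suc j < length W}"
  proof (intro set_eqI iffI)
    fix x assume "x \<in> {el W ! j | j. j < length (el W)}"
    then obtain j where j: "j < length (el W)" "x = el W ! j" by blast
    have a: "Suc j < length W" using iff j(1) by simp
    have "x = {W!j, W!Suc j}" using el_nth[of j W] j el_len[of W] by simp
    with a show "x \<in> {{W!j, W!Suc j} | j. Suc j < length W}" by blast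
  next
    fix x assume "x \<in> {{W!j, W!Suc j} | j. Suc j < length W}"
    then obtain j where j: "Suc j < length W" "x = {W!j, W!Suc j}" by blast
    have a: "j < length (el W)" using iff j(1) by simp
    have "x = el W ! j" using el_nth[of j W] j el_len[of W] by simp
    with a show "x \<in> {el W ! j | j. j < length (el W)}" by blast
  qed
  finally show ?thesis unfolding walk_edges_def by simp
qed

lemma cl_filter: "count_list xs e = length (filter ((=) e) xs)"
  by (induction xs) auto

lemma traversals_el: "traversals W e = count_list (el W) e"
proof -
  have "count_list (el W) e = length (filter ((=) e) (el W))"
    by (rule cl_filter)
  also have "\<dots> = card {i. i < length (el W) \<and> e = el W ! i}"
    by (rule length_filter_conv_card)
  also have "{i. i < length (el W) \<and> e = el W ! i} = {j. Suc j < length W \<and> {W ! j, W ! Suc j} = e}"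
    by (auto simp: el_len el_nth)
  finally show ?thesis unfolding traversals_def by simp
qed

lemma el_append: "xs \<noteq> [] \<Longrightarrow> ys \<noteq> [] \<Longrightarrow> el (xs@ys) = el xs @ {last xs, hd ys} # el ys"
proof (induction xs)
  case (Cons a xs)
  then show ?case by (cases xs; cases ys) auto
qed simp

lemma wk_append: "xs \<noteq> [] \<Longrightarrow> ys \<noteq> [] \<Longrightarrow> wk E (xs@ys) \<longleftrightarrow> wk E xs \<and> E (last xs) (hd ys) \<and> wk E ys"
proof (induction xs)
  case (Cons a xs)
  then show ?case by (cases xs; cases ys) auto
qed simp

lemma main:
  assumes sym: "\<And>u v. E u v \<Longrightarrow> E v u" and irr: "\<And>v. \<not> E v v"
  shows "W \<noteq> [] \<Longrightarrow> wk E W \<Longrightarrow> \<exists>W'. W' \<noteq> [] \<and> wk E W' \<and> hd W' = last W \<and> last W' = last W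
     \<and> set (el W') = set (el W) \<and> (\<forall>e. count_list (el W') e \<le> 2)"
proof (induction W rule: rev_induct)
  case Nil
  then show ?case by simp
next
  case (snoc v W0)
  show ?case
  proof (cases "W0 = []")
    case True
    then show ?thesis by (intro exI[of _ "[v]"]) auto
  next
    case False
    define u where "u = last W0"
    have elW: "el (W0 @ [v]) = el W0 @ [{u,v}]" using False el_append[of W0 "[v]"] by (simp add: u_def)
    have wW: "wk E W0" and Euv: "E u v" using False wk_append[of W0 "[v]" E] snoc.prems by (auto simp: u_def)
    obtain W' where W': "W' \<noteq> []" "wk E W'" "hd W' = u" "last W' = u"
      "set (el W') = set (el W0)" "\<forall>e. count_list (el W') e \<le> 2"
      using snoc.IH[OF False wW] u_def by blast
    show ?thesis
    proof (cases "{u,v} \<in> set (el W')")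
      case False
      define R where "R = [v] @ W' @ [v]"
      have elR: "el R = {v,u} # el W' @ [{u,v}]"
        unfolding R_def using W' el_append[of "[v]" "W' @ [v]"] el_append[of W' "[v]"]
        by (cases W') auto
      have wR: "wk E R"
        unfolding R_def using W' Euv sym wk_append[of "[v]" "W' @ [v]" E] wk_append[of W' "[v]" E]
        by (cases W') auto
      have "{v,u} = {u,v}" by auto
      then have cnt: "\<forall>e. count_list (el R) e \<le> 2"
        using elR W'(6) False by auto
      have hl: "hd R = v" "last R = v" "R \<noteq> []" by (auto simp: R_def)
      have "set (el R) = set (el (W0 @ [v]))" using elR elW W'(5) \<open>{v,u} = {u,v}\<close> by auto
      then show ?thesis using wR cnt hl by (intro exI[of _ R]) simp
    next
      case True
      have "v \<in> set W'"
      proof -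
        obtain j where j: "j < length (el W')" "el W' ! j = {u,v}" using True by (metis in_set_conv_nth)
        then have "{W'!j, W'!Suc j} = {u,v}" using el_nth el_len by metis
        then have "v = W'!j \<or> v = W'!Suc j" by blast
        moreover have "Suc j < length W'" using j el_len by (metis Suc_eq_plus1 less_diff_conv)
        ultimately show ?thesis by auto
      qed
      then obtain as bs where sp: "W' = as @ v # bs" by (metis split_list)
      have "v \<noteq> u" using Euv irr by metis
      then have "as \<noteq> []" using sp W'(3) by auto
      then obtain c as' where as: "as = c # as'" by (cases as) auto
      have c: "c = u" using W'(3) sp as by simp
      have lastb: "last (v#bs) = u" using W'(4) sp by simp
      define R where "R = (v#bs) @ (as' @ [v])"
      have e1: "el W' = el (c#as' @ [v]) @ el (v#bs)"
        using sp as el_append[of "c#as' @ [v]" "bs"] by (cases bs) auto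
      have e2: "el R = el (v#bs) @ el (c#as' @ [v])"
        unfolding R_def using el_append[of "v#bs" "as' @ [v]"] el_append[of "[c]" "as' @ [v]"] lastb c
        by (cases as') auto
      have w1: "wk E W' \<longleftrightarrow> wk E (c#as' @ [v]) \<and> wk E (v#bs)"
        using sp as wk_append[of "c#as' @ [v]" "bs" E] by (cases bs) auto
      have w2: "wk E R \<longleftrightarrow> wk E (v#bs) \<and> wk E (c#as' @ [v])"
        unfolding R_def using wk_append[of "v#bs" "as' @ [v]" E] wk_append[of "[c]" "as' @ [v]" E] lastb c
        by (cases as') auto
       have "wk E R" using w1 w2 W'(2) by simp
      moreover have "hd R = v" "last R = v" "R \<noteq> []" by (auto simp: R_def)
      moreover have "set (el R) = set (el (W0 @ [v]))" using True W'(5) elW e1 e2 by auto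
      moreover have "\<forall>e. count_list (el R) e \<le> 2" using W'(6) e1 e2 by (simp add: add.commute)
      ultimately show ?thesis by (intro exI[of _ R]) simp
    qed
  qed
qed

theorem lemma3:
  fixes E :: "'a \<Rightarrow> 'a \<Rightarrow> bool" and W :: "'a list"
  assumes "undirected_graph E" and "is_walk E W"
  shows "\<exists>W'. is_walk E W' \<and> walk_edges W' = walk_edges W \<and>
           (\<forall>e \<in> walk_edges W'. traversals W' e \<le> 2)"
proof -
  have s: "\<And>u v. E u v \<Longrightarrow> E v u" and i: "\<And>v. \<not> E v v"
    using assms(1) unfolding undirected_graph_def by auto
  have "W \<noteq> []" "wk E W" using assms(2) unfolding is_walk_def wk_iff by auto
  from main[OF s i this] obtain W' where "W' \<noteq> []" "wk E W'" "set (el W') = set (el W)"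
    "\<forall>e. count_list (el W') e \<le> 2" by blast
  then show ?thesis
    by (intro exI[of _ W']) (auto simp: is_walk_def wk_iff[symmetric] walk_edges_el traversals_el)
qed

end
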